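(* For $n>2$, the homomorphism $\iota\colon G_n^2\to G_{n,\mathcal{P}}^2$ defined by $\iota(a_{ij})=a_{ij}^0$ is a monomorphism.
   Context: $G_n^2$ is the group with generators $a_{ij}=a_{\{i,j\}}$ for $2$-element subsets $\{i,j\}\subset\{1,\dots,n\}$ and relations $a_{ij}^2=1$; $a_{ij}a_{kl}=a_{kl}a_{ij}$ for distinct $i,j,k,l$; $a_{ij}a_{ik}a_{jk}=a_{jk}a_{ik}a_{ij}$ for distinct $i,j,k$. The group $G_{n,\mathcal{P}}^2$ ($G_n^2$ with parity) has generators $a_{ij}^{\epsilon}=a_{\{i,j\}}^{\epsilon}$ for $2$-element subsets $\{i,j\}$ and $\epsilon\in\{0,1\}$, with relations $(a_{ij}^\epsilon)^2=1$; $a_{ij}^{\epsilon}a_{kl}^{\epsilon'}=a_{kl}^{\epsilon'}a_{ij}^{\epsilon}$ for $\{i,j\}\cap\{k,l\}=\emptyset$ and all $\epsilon,\epsilon'$; and $a_{ij}^{\epsilon_{ij}}a_{ik}^{\epsilon_{ik}}a_{jk}^{\epsilon_{jk}}=a_{jk}^{\epsilon_{jk}}a_{ik}^{\epsilon_{ik}}a_{ij}^{\epsilon_{ij}}$ for distinct $i,j,k$ whenever $\epsilon_{ij}+\epsilon_{ik}+\epsilon_{jk}\equiv 0\pmod 2$. *)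

theory Defs
  imports Main
begin

(* Group presentations <X | R>: words are lists of letters (x, True) = x, (x, False) = x^-1.
   pres_eq R u v  means  u = v  in the group presented by relations R (pairs of words u = v). *)
inductive pres_eq :: "(('g \<times> bool) list \<times> ('g \<times> bool) list) set \<Rightarrow> ('g \<times> bool) list \<Rightarrow> ('g \<times> bool) list \<Rightarrow> bool"
  for R where
  pe_refl: "pres_eq R w w"
| pe_sym: "pres_eq R u v \<Longrightarrow> pres_eq R v u"
| pe_trans: "pres_eq R u v \<Longrightarrow> pres_eq R v w \<Longrightarrow> pres_eq R u w"
| pe_cancel: "pres_eq R [(x, b), (x, \<not> b)] []"
| pe_rel: "(u, v) \<in> R \<Longrightarrow> pres_eq R u v"
| pe_ctx: "pres_eq R u v \<Longrightarrow> pres_eq R (p @ u @ q) (p @ v @ q)"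

definition letter :: "'g \<Rightarrow> 'g \<times> bool" where
  "letter x = (x, True)"

(* generators a_{ij} of G_n^2 are indexed by 2-element subsets {i,j} of {1..n} *)
definition pairs :: "nat \<Rightarrow> nat set set" where
  "pairs n = {{i, j} | i j. i \<in> {1..n} \<and> j \<in> {1..n} \<and> i \<noteq> j}"

definition rels_G :: "nat \<Rightarrow> ((nat set \<times> bool) list \<times> (nat set \<times> bool) list) set" where
  "rels_G n =
     {([letter a, letter a], []) | a. a \<in> pairs n}
   \<union> {([letter {i,j}, letter {k,l}], [letter {k,l}, letter {i,j}]) | i j k l.
        i \<in> {1..n} \<and> j \<in> {1..n} \<and> k \<in> {1..n} \<and> l \<in> {1..n} \<and> distinct [i, j, k, l]}
   \<union> {([letter {i,j}, letter {i,k}, letter {j,k}], [letter {j,k}, letter {i,k}, letter {i,j}]) | i j k.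
        i \<in> {1..n} \<and> j \<in> {1..n} \<and> k \<in> {1..n} \<and> distinct [i, j, k]}"

(* generators a_{ij}^eps of G_{n,P}^2: pairs ({i,j}, eps) with eps \<in> {0,1} *)
definition pgens :: "nat \<Rightarrow> (nat set \<times> nat) set" where
  "pgens n = {(a, e). a \<in> pairs n \<and> e \<in> {0, 1}}"

definition rels_GP :: "nat \<Rightarrow> (((nat set \<times> nat) \<times> bool) list \<times> ((nat set \<times> nat) \<times> bool) list) set" where
  "rels_GP n =
     {([letter g, letter g], []) | g. g \<in> pgens n}
   \<union> {([letter ({i,j}, e), letter ({k,l}, e')], [letter ({k,l}, e'), letter ({i,j}, e)]) | i j k l e e'.
        i \<in> {1..n} \<and> j \<in> {1..n} \<and> k \<in> {1..n} \<and> l \<in> {1..n} \<and> distinct [i, j, k, l]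
        \<and> e \<in> {0, 1} \<and> e' \<in> {0, 1}}
   \<union> {([letter ({i,j}, eij), letter ({i,k}, eik), letter ({j,k}, ejk)],
        [letter ({j,k}, ejk), letter ({i,k}, eik), letter ({i,j}, eij)]) | i j k eij eik ejk.
        i \<in> {1..n} \<and> j \<in> {1..n} \<and> k \<in> {1..n} \<and> distinct [i, j, k]
        \<and> eij \<in> {0, 1} \<and> eik \<in> {0, 1} \<and> ejk \<in> {0, 1} \<and> even (eij + eik + ejk)}"

definition iota_word :: "(nat set \<times> bool) list \<Rightarrow> ((nat set \<times> nat) \<times> bool) list" where
  "iota_word w = map (\<lambda>(a, b). ((a, 0), b)) w"

end

theory Submission
  imports Defs
begin

definition rho_word :: "((nat set \<times> nat) \<times> bool) list \<Rightarrow> (nat set \<times> bool) list" where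
  "rho_word w = map (\<lambda>((a, e), b). (a, b)) w"

lemma rho_iota: "rho_word (iota_word w) = w"
  by (induction w) (auto simp: rho_word_def iota_word_def)

lemma rho_rel:
  assumes "(u, v) \<in> rels_GP n"
  shows "(rho_word u, rho_word v) \<in> rels_G n"
  using assms unfolding rels_GP_def rels_G_def pgens_def
  by (auto simp: rho_word_def letter_def) blast+

lemma rho_hom:
  "pres_eq (rels_GP n) u v \<Longrightarrow> pres_eq (rels_G n) (rho_word u) (rho_word v)"
proof (induction rule: pres_eq.induct)
  case (pe_refl w) then show ?case by (rule pres_eq.pe_refl) 
next
  case (pe_sym u v) then show ?case by (blast intro: pres_eq.pe_sym)
next
  case (pe_trans u v w) then show ?case by (metis pres_eq.pe_trans)
next
  case (pe_cancel x b)
  obtain a e where "x = (a, e)" by (cases x)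
  then show ?case using pres_eq.pe_cancel[of "rels_G n" a b] by (simp add: rho_word_def)
next
  case (pe_rel u v) then show ?case using rho_rel pres_eq.pe_rel by blast
next
  case (pe_ctx u v p q)
  then show ?case using pres_eq.pe_ctx[of "rels_G n" "rho_word u" "rho_word v" "rho_word p" "rho_word q"]
    by (simp add: rho_word_def)
qed

lemma iota_rel:
  assumes "(u, v) \<in> rels_G n"
  shows "(iota_word u, iota_word v) \<in> rels_GP n"
  using assms unfolding rels_GP_def rels_G_def pgens_def
  by (auto simp: iota_word_def letter_def) blast+

lemma iota_hom:
  "pres_eq (rels_G n) u v \<Longrightarrow> pres_eq (rels_GP n) (iota_word u) (iota_word v)"
proof (induction rule: pres_eq.induct)
  case (pe_refl w) then show ?case by (rule pres_eq.pe_refl) 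
next
  case (pe_sym u v) then show ?case by (blast intro: pres_eq.pe_sym)
next
  case (pe_trans u v w) then show ?case by (metis pres_eq.pe_trans)
next
  case (pe_cancel x b)
  then show ?case using pres_eq.pe_cancel[of "rels_GP n" "(x,0)" b] by (simp add: iota_word_def)
next
  case (pe_rel u v) then show ?case using iota_rel pres_eq.pe_rel by blast
next
  case (pe_ctx u v p q)
  then show ?case using pres_eq.pe_ctx[of "rels_GP n" "iota_word u" "iota_word v" "iota_word p" "iota_word q"]
    by (simp add: iota_word_def)
qed

theorem mainTheorem3:
  fixes n :: nat and u v :: "(nat set \<times> bool) list"
  assumes "n > 2"
    and "fst ` set u \<subseteq> pairs n" and "fst ` set v \<subseteq> pairs n"
  shows "pres_eq (rels_G n) u v \<longleftrightarrow> pres_eq (rels_GP n) (iota_word u) (iota_word v)"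
  using iota_hom rho_hom[of n "iota_word u" "iota_word v"] by (auto simp: rho_iota)

end
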